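(* There exist a connected analytic submanifold $S$ of $\mathbb{R}^2$ and $P\in\mathbb{R}[x_1,x_2;x_3]$ of degree $4$ in $x_3$ such that: (1) $P$ never nullifies on $S$; (2) $\mathrm{Disc}^4_{x_3}(P)$ is not the zero polynomial and is order-invariant on $S$; (3) $P$ is not projectively delineable over $S$. For instance, one may take $S=\{(x_1,x_2): x_1^2+x_2^2=1\}$ and $P=(1-x_1)x_3^4+4x_2x_3^3+(2+6x_1)x_3^2-4x_2x_3+(1-x_1)$.
   Context: For $\mathbf{x}_0\in\mathbb{R}^2$, $E_{\mathbf{x}_0}P$ is the univariate polynomial in $x_3$ obtained by substituting $\mathbf{x}_0$ for $(x_1,x_2)$; "$P$ never nullifies on $S$" means $E_{\mathbf{x}}P\ne0$ for all $\mathbf{x}\in S$. $\mathrm{Disc}^4_{x_3}(P)\in\mathbb{R}[x_1,x_2]$ is the discriminant of $P$ with respect to $x_3$ for formal degree $4$. For a polynomial $f$ and point $v$, $\mathrm{ord}(f,v)$ is the least total order of a partial derivative of $f$ nonzero at $v$; order-invariant on $S$ means constant order on $S$. $\mathbb{RP}^1$ is the quotient of $\mathbb{R}^2\setminus\{(0,0)\}$ by proportionality with the quotient topology; $(u:v)$ is the class of $(u,v)$. $H^4(P)(\mathbf{x},x_3,y)=\sum_{k=0}^4c_k(\mathbf{x})x_3^ky^{4-k}$ for $P=\sum_kc_k(\mathbf{x})x_3^k$. A projective root of a binary form $g(u,v)$ is $(u_0:v_0)$ with $g(u_0,v_0)=0$, with multiplicity (for $g\ne0$) the largest $m$ with $(v_0u-u_0v)^m\mid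 g$. $Z_{\mathbb{RP}^1}(P,S)=\{(\mathbf{x},(x_3:y))\in S\times\mathbb{RP}^1:H^4(P)(\mathbf{x},x_3,y)=0\}$. $P$ is projectively delineable on $S$ if there are $k\in\mathbb{N}$ and continuous $\theta_1,\dots,\theta_k:S\to\mathbb{RP}^1$ such that $Z_{\mathbb{RP}^1}(P,S)$ is the disjoint union of their graphs and, for each $l$, there is $m_l\ge1$ with $\theta_l(\mathbf{x})$ a projective root of $E_{\mathbf{x}}H^4(P)$ of multiplicity $m_l$ for all $\mathbf{x}\in S$. *)

theory Defs
  imports "HOL-Analysis.Analysis" "Subresultants.Resultant_Prelim"
begin

text \<open>A polynomial in R[x1,x2] is a "real poly poly": the inner variable is x1, the
  outer variable is x2.  A polynomial in R[x1,x2;x3] is a "real poly poly poly" whose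
  outer variable is x3 and whose coefficients c_k lie in R[x1,x2].\<close>

definition eval2 :: "real poly poly \<Rightarrow> real \<times> real \<Rightarrow> real" where
  "eval2 q x = poly (poly q [:snd x:]) (fst x)"

definition evalE :: "real poly poly poly \<Rightarrow> real \<times> real \<Rightarrow> real poly" where
  "evalE P x = map_poly (\<lambda>c. eval2 c x) P"

definition never_nullifies :: "real poly poly poly \<Rightarrow> (real \<times> real) set \<Rightarrow> bool" where
  "never_nullifies P S \<longleftrightarrow> (\<forall>x\<in>S. evalE P x \<noteq> 0)"

text \<open>Discriminant w.r.t. x3 for formal degree 4:
  a_4 * Disc = (-1)^(4*3/2) * Res_{4,3}(P, dP/dx3) with (-1)^6 = 1.\<close>
definition Disc4 :: "real poly poly poly \<Rightarrow> real poly poly" where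
  "Disc4 P = resultant_sub 4 3 P (pderiv P) div coeff P 4"

definition pdiff :: "nat \<Rightarrow> nat \<Rightarrow> real poly poly \<Rightarrow> real poly poly" where
  "pdiff i j q = ((map_poly pderiv) ^^ i) ((pderiv ^^ j) q)"

definition ord2 :: "real poly poly \<Rightarrow> real \<times> real \<Rightarrow> nat" where
  "ord2 f v = (LEAST n. \<exists>i j. i + j = n \<and> eval2 (pdiff i j f) v \<noteq> 0)"

definition order_invariant :: "real poly poly \<Rightarrow> (real \<times> real) set \<Rightarrow> bool" where
  "order_invariant f S \<longleftrightarrow> (\<exists>n. \<forall>v\<in>S. ord2 f v = n)"

definition real_analytic_on :: "(real \<times> real) set \<Rightarrow> (real \<times> real \<Rightarrow> real) \<Rightarrow> bool" where
  "real_analytic_on U f \<longleftrightarrow>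
     (\<forall>p\<in>U. \<exists>r>0. \<exists>a :: nat \<Rightarrow> nat \<Rightarrow> real. \<forall>x\<in>ball p r.
        ((\<lambda>(i, j). a i j * (fst x - fst p) ^ i * (snd x - snd p) ^ j) has_sum f x) UNIV)"

definition analytic_submanifold :: "(real \<times> real) set \<Rightarrow> bool" where
  "analytic_submanifold S \<longleftrightarrow>
     (\<exists>d::nat. d \<le> 2 \<and> (\<forall>p\<in>S. \<exists>U. open U \<and> p \<in> U \<and>
        ((d = 2 \<and> S \<inter> U = U) \<or>
         (d = 1 \<and> (\<exists>f f'. real_analytic_on U f \<and> (f has_derivative f') (at p) \<and>
                     f' \<noteq> (\<lambda>_. 0) \<and> S \<inter> U = {x\<in>U. f x = 0})) \<or>
         (d = 0 \<and> S \<inter> U = {p}))))"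

definition proj_cls :: "real \<times> real \<Rightarrow> (real \<times> real) set" where
  "proj_cls p = {q. \<exists>t. t \<noteq> 0 \<and> q = t *\<^sub>R p}"

definition RP1 :: "(real \<times> real) set set" where
  "RP1 = proj_cls ` (UNIV - {0})"

definition RP1_top :: "(real \<times> real) set topology" where
  "RP1_top = topology (\<lambda>V. V \<subseteq> RP1 \<and> openin (subtopology euclidean (UNIV - {0})) (\<Union>V))"

text \<open>E_x H^4(P) as a binary form in (u,v) = (x3,y), represented as a bivariate
  polynomial with inner variable u and outer variable v.\<close>
definition homog4 :: "real poly poly poly \<Rightarrow> real \<times> real \<Rightarrow> real poly poly" where
  "homog4 P x = (\<Sum>k\<le>4. monom (monom (eval2 (coeff P k) x) k) (4 - k))"

definition proj_root :: "real poly poly \<Rightarrow> real \<times> real \<Rightarrow> bool" where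
  "proj_root g p \<longleftrightarrow> p \<noteq> 0 \<and> eval2 g p = 0"

text \<open>the linear form v0*u - u0*v\<close>
definition linform :: "real \<times> real \<Rightarrow> real poly poly" where
  "linform p = [: monom (snd p) 1, [: - fst p :] :]"

definition proj_root_mult :: "real poly poly \<Rightarrow> real \<times> real \<Rightarrow> nat \<Rightarrow> bool" where
  "proj_root_mult g p m \<longleftrightarrow> g \<noteq> 0 \<and> proj_root g p \<and>
     linform p ^ m dvd g \<and> \<not> linform p ^ (Suc m) dvd g"

definition Z_RP1 :: "real poly poly poly \<Rightarrow> (real \<times> real) set \<Rightarrow>
    ((real \<times> real) \<times> (real \<times> real) set) set" where
  "Z_RP1 P S = {(x, c). x \<in> S \<and> c \<in> RP1 \<and> (\<exists>p\<in>c. eval2 (homog4 P x) p = 0)}"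

definition proj_delineable :: "real poly poly poly \<Rightarrow> (real \<times> real) set \<Rightarrow> bool" where
  "proj_delineable P S \<longleftrightarrow>
     (\<exists>k::nat. \<exists>\<theta> :: nat \<Rightarrow> real \<times> real \<Rightarrow> (real \<times> real) set. \<exists>m :: nat \<Rightarrow> nat.
        (\<forall>l<k. continuous_map (subtopology euclidean S) RP1_top (\<theta> l)) \<and>
        (\<forall>l<k. \<forall>x\<in>S. \<theta> l x \<in> RP1) \<and>
        Z_RP1 P S = (\<Union>l<k. {(x, \<theta> l x) | x. x \<in> S}) \<and>
        (\<forall>l<k. \<forall>l'<k. l \<noteq> l' \<longrightarrow> (\<forall>x\<in>S. \<theta> l x \<noteq> \<theta> l' x)) \<and>
        (\<forall>l<k. m l \<ge> 1 \<and> (\<forall>x\<in>S. \<forall>p\<in>\<theta> l x. proj_root_mult (homog4 P x) p (m l))))"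

lemma proj_cls_eq: "q \<in> proj_cls p \<Longrightarrow> proj_cls q = proj_cls p"
proof -
  assume "q \<in> proj_cls p"
  then obtain t where t: "t \<noteq> 0" "q = t *\<^sub>R p" unfolding proj_cls_def by blast
  show ?thesis
  proof
    show "proj_cls q \<subseteq> proj_cls p"
    proof
      fix r assume "r \<in> proj_cls q"
      then obtain s where s: "s \<noteq> 0" "r = s *\<^sub>R q" unfolding proj_cls_def by blast
      have "r = (s * t) *\<^sub>R p" using s t by simp
      moreover have "s * t \<noteq> 0" using s t by simp
      ultimately show "r \<in> proj_cls p" unfolding proj_cls_def by blast
    qed
    show "proj_cls p \<subseteq> proj_cls q"
    proof
      fix r assume "r \<in> proj_cls p"
      then obtain s where s: "s \<noteq> 0" "r = s *\<^sub>R p" unfolding proj_cls_def by blast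
      have "r = (s / t) *\<^sub>R q" using s t by simp
      moreover have "s / t \<noteq> 0" using s t by simp
      ultimately show "r \<in> proj_cls q" unfolding proj_cls_def by blast
    qed
  qed
qed

lemma proj_cls_disj: "c \<in> RP1 \<Longrightarrow> d \<in> RP1 \<Longrightarrow> q \<in> c \<Longrightarrow> q \<in> d \<Longrightarrow> c = d"
proof -
  assume h: "c \<in> RP1" "d \<in> RP1" "q \<in> c" "q \<in> d"
  then obtain a b where ab: "c = proj_cls a" "d = proj_cls b" unfolding RP1_def by blast
  have "proj_cls q = c" using ab h(3) proj_cls_eq by simp
  moreover have "proj_cls q = d" using ab h(4) proj_cls_eq by simp
  ultimately show "c = d" by simp
qed

lemma Union_Int_RP1:
  assumes "S \<subseteq> RP1" "T \<subseteq> RP1"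
  shows "\<Union>(S \<inter> T) = \<Union>S \<inter> \<Union>T"
proof
  show "\<Union>(S \<inter> T) \<subseteq> \<Union>S \<inter> \<Union>T" by (rule Union_Int_subset)
  show "\<Union>S \<inter> \<Union>T \<subseteq> \<Union>(S \<inter> T)"
  proof
    fix q assume "q \<in> \<Union>S \<inter> \<Union>T"
    then obtain c d where cd: "c \<in> S" "d \<in> T" "q \<in> c" "q \<in> d" by blast
    have "c \<in> RP1" "d \<in> RP1" using cd(1,2) assms by (auto simp only: subset_iff)
    then have "c = d" using cd(3,4) by (rule proj_cls_disj)
    then have "c \<in> S \<inter> T" using cd(1,2) by simp
    then show "q \<in> \<Union>(S \<inter> T)" using cd(3) by (rule UnionI)
  qed
qed

lemma istopology_RP1: "istopology (\<lambda>V. V \<subseteq> RP1 \<and> openin (subtopology euclidean (UNIV - {0})) (\<Union>V))"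
proof -
  have f1: "S \<inter> T \<subseteq> RP1 \<and> openin (subtopology euclidean (UNIV - {0})) (\<Union>(S \<inter> T))"
    if a: "S \<subseteq> RP1 \<and> openin (subtopology euclidean (UNIV - {0})) (\<Union>S)"
     and b: "T \<subseteq> RP1 \<and> openin (subtopology euclidean (UNIV - {0})) (\<Union>T)"
    for S T :: "(real\<times>real) set set"
  proof -
    have e: "\<Union>(S \<inter> T) = \<Union>S \<inter> \<Union>T"
      using a b by (intro Union_Int_RP1) simp_all
    have "openin (subtopology euclidean (UNIV - {0})) (\<Union>S \<inter> \<Union>T)"
      using a b by (intro openin_Int) simp_all
    then have o: "openin (subtopology euclidean (UNIV - {0})) (\<Union>(S \<inter> T))"
      by (simp only: e)
    have s: "S \<inter> T \<subseteq> RP1" using a by (intro le_infI1) simp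
    show ?thesis using s o by simp
  qed
  have f2: "\<Union>K \<subseteq> RP1 \<and> openin (subtopology euclidean (UNIV - {0})) (\<Union>(\<Union>K))"
    if h: "\<forall>S\<in>K. S \<subseteq> RP1 \<and> openin (subtopology euclidean (UNIV - {0})) (\<Union>S)"
    for K :: "(real\<times>real) set set set"
  proof -
    have e: "\<Union>(\<Union>K) = \<Union>(Union ` K)" by auto
    have "openin (subtopology euclidean (UNIV - {0})) (\<Union>(Union ` K))"
      using h by (intro openin_Union) auto
    then have o: "openin (subtopology euclidean (UNIV - {0})) (\<Union>(\<Union>K))" by (simp only: e)
    have s: "\<Union>K \<subseteq> RP1" using h by (intro Union_least) simp
    show ?thesis using s o by simp
  qed
  show ?thesis unfolding istopology_def using f1 f2 by blast
qed

lemma openin_RP1_top: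
  "openin RP1_top = (\<lambda>V. V \<subseteq> RP1 \<and> openin (subtopology euclidean (UNIV - {0})) (\<Union>V))"
  unfolding RP1_top_def by (rule topology_inverse'[OF istopology_RP1])

end

theory Submission
  imports Defs
begin

definition dropj :: "nat \<Rightarrow> 'a list \<Rightarrow> 'a list" where
  "dropj j xs = take j xs @ drop (Suc j) xs"

function dl :: "'a::comm_ring_1 option list list \<Rightarrow> 'a" where
 "dl [] = 1" |
 "dl (r # rs) = sum_list (map (\<lambda>j. case r ! j of None \<Rightarrow> 0 | Some a \<Rightarrow> (-1)^j * a * dl (map (dropj j) rs)) [0..<length r])"
  by pat_completeness auto
termination by (relation "Wellfounded.measure length") auto

definition oz :: "'a::zero option \<Rightarrow> 'a" where "oz x = (case x of None \<Rightarrow> 0 | Some a \<Rightarrow> a)"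

lemma nth_dropj: "j < length xs \<Longrightarrow> k < length xs - 1 \<Longrightarrow> dropj j xs ! k = xs ! (if k < j then k else Suc k)"
  unfolding dropj_def by (auto simp: nth_append min_def)

lemma length_dropj: "j < length xs \<Longrightarrow> length (dropj j xs) = length xs - 1"
  unfolding dropj_def by auto

lemma dl_det: "length M = n \<Longrightarrow> (\<forall>r\<in>set M. length r = n) \<Longrightarrow>
   dl M = det (mat n n (\<lambda>(i,j). oz (M!i!j)))"
proof (induction n arbitrary: M)
  case 0
  then show ?case by (simp add: det_def')
next
  case (Suc n)
  then obtain r rs where M: "M = r # rs" by (cases M) auto
  have lr: "length r = Suc n" and lrs: "length rs = n" and lr2: "\<forall>r'\<in>set rs. length r' = Suc n"
    using Suc.prems M by auto
  let ?A = "mat (Suc n) (Suc n) (\<lambda>(i,j). oz (M!i!j))"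
  have "det ?A = (\<Sum>j<Suc n. ?A $$ (0,j) * cofactor ?A 0 j)"
    by (rule laplace_expansion_row) auto
  also have "\<dots> = dl (r # rs)"
    unfolding dl.simps lr interv_sum_list_conv_sum_set_nat set_upt atLeast0LessThan
  proof (rule sum.cong[OF refl])
    fix j assume j: "j \<in> {..<Suc n}"
    have md: "mat_delete ?A 0 j = mat n n (\<lambda>(i,k). oz (map (dropj j) rs ! i ! k))"
      unfolding mat_delete_def M
    proof (rule eq_matI, goal_cases)
      case (1 i k)
      then show ?case using j lrs lr2 by (auto simp: nth_dropj)
    qed auto
    have ih: "det (mat_delete ?A 0 j) = dl (map (dropj j) rs)"
      unfolding md using j lrs lr2 by (intro Suc.IH[symmetric]) (auto simp: length_dropj)
    show "?A $$ (0,j) * cofactor ?A 0 j = (case r ! j of None \<Rightarrow> 0 | Some a \<Rightarrow> (-1)^j * a * dl (map (dropj j) rs))"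
      using j ih unfolding cofactor_def by (auto simp: M oz_def split: option.split)
  qed
  finally show ?case using M by simp
qed

definition Msyl :: "'a::zero poly \<Rightarrow> 'a poly \<Rightarrow> 'a option list list" where
 "Msyl p q = [[Some (coeff p 4), Some (coeff p 3), Some (coeff p 2), Some (coeff p 1), Some (coeff p 0), None, None],
             [None, Some (coeff p 4), Some (coeff p 3), Some (coeff p 2), Some (coeff p 1), Some (coeff p 0), None],
             [None, None, Some (coeff p 4), Some (coeff p 3), Some (coeff p 2), Some (coeff p 1), Some (coeff p 0)],
             [Some (coeff q 3), Some (coeff q 2), Some (coeff q 1), Some (coeff q 0), None, None, None],
             [None, Some (coeff q 3), Some (coeff q 2), Some (coeff q 1), Some (coeff q 0), None, None],
             [None, None, Some (coeff q 3), Some (coeff q 2), Some (coeff q 1), Some (coeff q 0), None],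
             [None, None, None, Some (coeff q 3), Some (coeff q 2), Some (coeff q 1), Some (coeff q 0)]]"

lemma less7: "(i::nat) < 7 \<longleftrightarrow> i = 0 \<or> i = 1 \<or> i = 2 \<or> i = 3 \<or> i = 4 \<or> i = 5 \<or> i = 6" by auto

lemma syl_Msyl: "sylvester_mat_sub 4 3 p q = mat 7 7 (\<lambda>(i,j). oz (Msyl p q ! i ! j))"
proof (rule eq_matI, goal_cases)
  case (1 i j)
  then have i: "i < 7" and j: "j < 7" by auto
  have i': "i < 4+3" and j': "j < 4+3" using i j by auto
  show ?case unfolding sylvester_mat_sub_index[OF i' j'] index_mat(1)[OF i j]
    using i j unfolding less7 by (auto simp: Msyl_def oz_def)
qed auto

lemma res43: "resultant_sub 4 3 p q = dl (Msyl p q)"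
  unfolding resultant_sub_def syl_Msyl by (subst dl_det[of _ 7]) (auto simp: Msyl_def)

lemma test: fixes x1 x2 :: real
  shows "dl (Msyl [:x1, -4*x2, -6*x1, 4*x2, x1:] [:-4*x2, -12*x1, 12*x2, 4*x1:]) = x1 * (16384 * (x1^2+x2^2)^3)"
  apply (simp add: Msyl_def eval_nat_numeral)
  apply (simp add: upt_rec dropj_def)
  apply (simp add: algebra_simps power2_eq_square power3_eq_cube)
  done

definition X1 :: "real poly poly" where "X1 = [:[:0,1:]:]"
definition X2 :: "real poly poly" where "X2 = [:0,1:]"
definition PP :: "real poly poly poly" where "PP = [:X1, -4*X2, -6*X1, 4*X2, X1:]"
definition DD :: "real poly poly" where "DD = 16384 * (X1^2 + X2^2)^3"

lemma ev_X1[simp]: "eval2 X1 x = fst x" by (simp add: eval2_def X1_def)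
lemma ev_X2[simp]: "eval2 X2 x = snd x" by (simp add: eval2_def X2_def)
lemma ev_add[simp]: "eval2 (a + b) x = eval2 a x + eval2 b x" by (simp add: eval2_def)
lemma ev_mult[simp]: "eval2 (a * b) x = eval2 a x * eval2 b x" by (simp add: eval2_def)
lemma ev_minus[simp]: "eval2 (- a) x = - eval2 a x" by (simp add: eval2_def)
lemma ev_num[simp]: "eval2 (numeral n) x = numeral n" by (simp add: eval2_def)
lemma ev_0[simp]: "eval2 0 x = 0" by (simp add: eval2_def)
lemma ev_1[simp]: "eval2 1 x = 1" by (simp add: eval2_def)
lemma ev_pow[simp]: "eval2 (a ^ n) x = eval2 a x ^ n" by (induction n) auto

lemma ev_hom: "comm_ring_hom (\<lambda>c. eval2 c x)"
  by unfold_locales auto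

lemma X1_nz: "X1 \<noteq> 0" by (simp add: X1_def)

lemma degree_PP: "degree PP = 4"
  by (simp add: PP_def X1_nz)

lemma pderiv_PP: "pderiv PP = [:-4*X2, -12*X1, 12*X2, 4*X1:]"
  by (simp add: PP_def pderiv_pCons algebra_simps)

lemma map_PP: "map_poly (\<lambda>c. eval2 c x) PP = [:fst x, -4 * snd x, -6 * fst x, 4 * snd x, fst x:]"
  by (rule poly_eqI) (simp add: PP_def coeff_map_poly coeff_pCons split: nat.split)

lemma map_dPP: "map_poly (\<lambda>c. eval2 c x) (pderiv PP) = [:-4 * snd x, -12 * fst x, 12 * snd x, 4 * fst x:]"
  unfolding pderiv_PP
  by (rule poly_eqI) (simp add: coeff_map_poly coeff_pCons split: nat.split)

lemma ev_res: "eval2 (resultant_sub 4 3 PP (pderiv PP)) x = fst x * (16384 * (fst x^2 + snd x^2)^3)"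
proof -
  interpret h: comm_ring_hom "\<lambda>c. eval2 c x" by (rule ev_hom)
  have "eval2 (resultant_sub 4 3 PP (pderiv PP)) x = det (map_mat (\<lambda>c. eval2 c x) (sylvester_mat_sub 4 3 PP (pderiv PP)))"
    unfolding resultant_sub_def by simp
  also have "\<dots> = resultant_sub 4 3 (map_poly (\<lambda>c. eval2 c x) PP) (map_poly (\<lambda>c. eval2 c x) (pderiv PP))"
    unfolding resultant_sub_def by (subst sylvester_mat_sub_map) auto
  also have "\<dots> = fst x * (16384 * (fst x^2 + snd x^2)^3)"
    unfolding map_PP map_dPP res43 by (rule test)
  finally show ?thesis .
qed

lemma pp_ext: fixes q r :: "real poly poly" assumes "\<And>a b. eval2 q (a,b) = eval2 r (a,b)" shows "q = r"
proof -
  have "poly (q - r) [:b:] = 0" for b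
  proof -
    have "poly (poly q [:b:]) = poly (poly r [:b:])" using assms by (auto simp: eval2_def fun_eq_iff)
    hence "poly q [:b:] = poly r [:b:]" by (simp add: poly_eq_poly_eq_iff)
    thus ?thesis by simp
  qed
  hence sub: "range (\<lambda>b. [:b:]) \<subseteq> {y. poly (q - r) y = 0}" by auto
  have "infinite (range (\<lambda>b::real. [:b:]))"
  proof
    assume "finite (range (\<lambda>b::real. [:b:]))"
    then have "finite (UNIV :: real set)" by (rule finite_imageD) (auto simp: inj_on_def)
    then show False using infinite_UNIV_char_0[where 'a=real] by blast
  qed
  hence "infinite {y. poly (q-r) y = 0}" using sub finite_subset by blast
  hence "q - r = 0" using poly_roots_finite by blast
  thus ?thesis by simp
qed

lemma res_eq: "resultant_sub 4 3 PP (pderiv PP) = X1 * DD"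
  by (rule pp_ext) (simp add: ev_res DD_def)

lemma Disc_PP: "Disc4 PP = DD"
  unfolding Disc4_def res_eq by (simp add: PP_def X1_nz eval_nat_numeral)

lemma ev_DD: "x \<noteq> 0 \<Longrightarrow> eval2 DD x \<noteq> 0"
proof -
  assume "x \<noteq> 0"
  then have "fst x^2 + snd x^2 > 0" by (cases x) (auto simp: sum_power2_gt_zero_iff zero_prod_def)
  then have "16384 * (fst x^2+snd x^2)^3 > (0::real)" by (intro mult_pos_pos zero_less_power) auto
  then show ?thesis unfolding DD_def by (simp only: ev_mult ev_num ev_pow ev_add ev_X1 ev_X2)
qed

lemma ord_DD: "x \<noteq> 0 \<Longrightarrow> ord2 DD x = 0"
  unfolding ord2_def using ev_DD[of x] by (intro Least_eq_0) (auto simp: pdiff_def)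



definition Wf :: "real \<times> real \<Rightarrow> complex" where
  "Wf p = (of_real (fst p) + \<i> * of_real (snd p))^2 / of_real (fst p^2 + snd p^2)"

definition Fc :: "(real \<times> real) set \<Rightarrow> complex" where
  "Fc c = Wf (SOME p. p \<in> c)"

lemma Wf_scale: "t \<noteq> 0 \<Longrightarrow> Wf (t *\<^sub>R p) = Wf p"
proof -
  assume t: "t \<noteq> 0"
  obtain u v where p: "p = (u,v)" by (cases p)
  have e1: "complex_of_real (t*u) + \<i> * of_real (t * v) = of_real t * (of_real u + \<i> * of_real v)"
    by (simp add: algebra_simps)
  have e2: "complex_of_real ((t*u)^2 + (t * v)^2) = of_real t ^2 * of_real (u^2+v^2)"
    by (simp add: algebra_simps power_mult_distrib)
  have "Wf (t *\<^sub>R p) = Wf (t * u, t * v)" by (simp add: p)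
  also have "\<dots> = (of_real t)^2 * (of_real u + \<i> * of_real v)^2 / ((of_real t)^2 * of_real (u^2+v^2))"
    unfolding Wf_def fst_conv snd_conv e1 e2
    by (simp only: power_mult_distrib)
  also have "\<dots> = Wf p" unfolding Wf_def p using t by simp
  finally show ?thesis .
qed

lemma den_nz: "p \<noteq> 0 \<Longrightarrow> complex_of_real (fst p^2 + snd p^2) \<noteq> 0"
  by (cases p) (simp only: of_real_eq_0_iff sum_power2_eq_zero_iff, auto simp: zero_prod_def)

lemma Wf_cont: "continuous_on (UNIV - {0}) Wf"
  unfolding Wf_def
  apply (intro continuous_intros)
  using den_nz by blast

lemma RP1_ex: "c \<in> RP1 \<Longrightarrow> \<exists>p. p \<in> c"
  unfolding RP1_def proj_cls_def by (auto intro: exI[of _ 1])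

lemma RP1_nz: "c \<in> RP1 \<Longrightarrow> p \<in> c \<Longrightarrow> p \<noteq> 0"
  unfolding RP1_def proj_cls_def by (auto simp: zero_prod_def)

lemma RP1_scale: "c \<in> RP1 \<Longrightarrow> p \<in> c \<Longrightarrow> q \<in> c \<Longrightarrow> \<exists>t. t \<noteq> 0 \<and> q = t *\<^sub>R p"
proof -
  assume "c \<in> RP1" "p \<in> c" "q \<in> c"
  then obtain a t s where "t \<noteq> 0" "s \<noteq> 0" "p = t *\<^sub>R a" "q = s *\<^sub>R a"
    unfolding RP1_def proj_cls_def by auto
  then show ?thesis by (intro exI[of _ "s / t"]) auto
qed

lemma self_cls: "p \<noteq> 0 \<Longrightarrow> proj_cls p \<in> RP1 \<and> p \<in> proj_cls p"
  unfolding RP1_def proj_cls_def by (auto intro: exI[of _ 1])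

lemma Fc_eq: "c \<in> RP1 \<Longrightarrow> p \<in> c \<Longrightarrow> Fc c = Wf p"
proof -
  assume c: "c \<in> RP1" and p: "p \<in> c"
  have "(SOME p. p \<in> c) \<in> c" using p by (rule someI)
  then obtain t where "t \<noteq> 0" "(SOME p. p \<in> c) = t *\<^sub>R p" using RP1_scale[OF c p] by blast
  then show ?thesis unfolding Fc_def by (simp add: Wf_scale)
qed

lemma Union_RP1: "\<Union>RP1 = UNIV - {0}"
  using RP1_nz self_cls by blast

lemma topspace_RP1: "topspace RP1_top = RP1"
proof -
  have "openin RP1_top RP1" unfolding openin_RP1_top Union_RP1 by simp
  then have "RP1 \<subseteq> topspace RP1_top" by (rule openin_subset)
  moreover have "topspace RP1_top \<subseteq> RP1"
    unfolding topspace_def openin_RP1_top by auto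
  ultimately show ?thesis by auto
qed

lemma Fc_cont: "continuous_map RP1_top euclidean Fc"
  unfolding continuous_map topspace_RP1
proof (intro conjI allI impI)
  fix U :: "complex set" assume "openin euclidean U"
  then have U: "open U" by simp
  have eq: "\<Union>{c \<in> RP1. Fc c \<in> U} = (UNIV - {0}) \<inter> Wf -` U"
  proof
    show "\<Union>{c \<in> RP1. Fc c \<in> U} \<subseteq> (UNIV - {0}) \<inter> Wf -` U"
      using Fc_eq RP1_nz by fastforce
    show "(UNIV - {0}) \<inter> Wf -` U \<subseteq> \<Union>{c \<in> RP1. Fc c \<in> U}"
    proof
      fix p assume "p \<in> (UNIV - {0}) \<inter> Wf -` U"
      then have "p \<noteq> 0" "Wf p \<in> U" by auto
      then show "p \<in> \<Union>{c \<in> RP1. Fc c \<in> U}"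
        using self_cls[of p] Fc_eq[of "proj_cls p" p] by auto
    qed
  qed
  show "openin RP1_top {c \<in> RP1. Fc c \<in> U}"
    unfolding openin_RP1_top eq
    using continuous_openin_preimage_gen[OF Wf_cont U] by auto
qed auto

lemma lift_cont:
  assumes "continuous_map (subtopology euclidean S) RP1_top \<theta>"
  shows "continuous_on S (\<lambda>x. Fc (\<theta> x))"
proof -
  have "continuous_map (subtopology euclidean S) euclidean (Fc \<circ> \<theta>)"
    using assms Fc_cont by (rule continuous_map_compose)
  then show ?thesis by (simp add: o_def)
qed

lemma key:
  fixes c1 c2 u v :: real
  assumes ab: "c1^2 + c2^2 = 1" and uv: "(u,v) \<noteq> 0"
    and r: "c1 * (u^4 - 6*u^2 * v^2 + v^4) + c2 * (4*u^3 * v - 4*u * v^3) = 0"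
  shows "Wf (u,v) ^ 4 = - ((complex_of_real c1 + \<i> * complex_of_real c2)^2)"
proof -
  define A where "A = u^4 - 6*u^2 * v^2 + v^4"
  define B where "B = 4*u^3 * v - 4*u * v^3"
  define n where "n = u^2 + v^2"
  have n: "n \<noteq> 0" using uv unfolding n_def by (auto simp: sum_power2_eq_zero_iff zero_prod_def)
  have w4: "(of_real u + \<i> * of_real v)^4 = (of_real A + \<i> * of_real B)"
    unfolding A_def B_def by (simp add: complex_eq_iff eval_nat_numeral algebra_simps)
  have w8: "(of_real u + \<i> * of_real v)^8 = (of_real (A^2 - B^2) + \<i> * of_real (2*A*B))"
  proof -
    have "(of_real u + \<i> * of_real v)^8 = ((of_real u + \<i> * of_real v)^4)^2" by (simp add: power_mult[symmetric])
    also have "\<dots> = (of_real (A^2 - B^2) + \<i> * of_real (2*A*B))" unfolding w4 by (simp add: complex_eq_iff power2_eq_square)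
    finally show ?thesis .
  qed
  have nAB: "n^4 = A^2 + B^2" unfolding n_def A_def B_def by (simp add: eval_nat_numeral algebra_simps)
  have rr: "c1 * A + c2 * B = 0" using r unfolding A_def B_def .
  have i1: "A^2 - B^2 + (c1^2-c2^2)*(A^2+B^2) = 2*(c1*A - c2*B)*(c1*A+c2*B) + (A^2-B^2)*(1 - (c1^2+c2^2))"
    by (simp add: algebra_simps power2_eq_square)
  have i2: "2*A*B + 2*c1*c2*(A^2+B^2) = 2*(c1*A+c2*B)*(c2*A+c1*B) + 2*A*B*(1 - (c1^2+c2^2))"
    by (simp add: algebra_simps power2_eq_square)
  have z1: "A^2 - B^2 + (c1^2-c2^2)*(A^2+B^2) = 0" unfolding i1 using ab rr by simp
  have z2: "2*A*B + 2*c1*c2*(A^2+B^2) = 0" unfolding i2 using ab rr by simp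
  have e1: "A^2 - B^2 = - (c1^2 - c2^2) * n^4" unfolding nAB mult_minus_left using z1 add_eq_0_iff2 by blast
  have e2: "2*A*B = - (2*c1*c2) * n^4" unfolding nAB mult_minus_left using z2 add_eq_0_iff2 mult.assoc by metis
  have "Wf (u,v) ^ 4 = (of_real u + \<i> * of_real v)^8 / of_real (n^4)"
    unfolding Wf_def n_def by (simp add: power_divide power_mult[symmetric])
  also have "\<dots> = (of_real (- (c1^2 - c2^2) * n^4) + \<i> * of_real (- (2*c1*c2) * n^4)) / of_real (n^4)"
    unfolding w8 e1 e2 ..
  also have "\<dots> = - ((complex_of_real c1 + \<i> * complex_of_real c2)^2)"
    using n by (simp add: complex_eq_iff power2_eq_square)
  finally show ?thesis .
qed


lemma ev_monom2: "eval2 (monom (monom a k) n) p = a * fst p ^ k * snd p ^ n"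
  by (simp add: eval2_def poly_monom)

lemma ev_sum: "eval2 (sum f A) p = (\<Sum>k\<in>A. eval2 (f k) p)"
  by (simp add: eval2_def poly_sum)

lemma coeff_PP: "coeff PP 0 = X1" "coeff PP 1 = -4*X2" "coeff PP 2 = -6*X1" "coeff PP 3 = 4*X2" "coeff PP 4 = X1"
  by (simp_all add: PP_def eval_nat_numeral)

lemma ev_homog: "eval2 (homog4 PP x) p =
  fst x * (fst p^4 - 6*fst p^2 * snd p^2 + snd p^4) + snd x * (4*fst p^3 * snd p - 4*fst p * snd p^3)"
proof -
  have "eval2 (homog4 PP x) p = (\<Sum>k\<le>4. eval2 (coeff PP k) x * fst p ^ k * snd p ^ (4 - k))"
    unfolding homog4_def ev_sum ev_monom2 ..
  also have "\<dots> = eval2 (coeff PP 0) x * snd p ^ 4 + eval2 (coeff PP 1) x * fst p * snd p ^ 3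
     + eval2 (coeff PP 2) x * fst p^2 * snd p^2 + eval2 (coeff PP 3) x * fst p^3 * snd p
     + eval2 (coeff PP 4) x * fst p ^ 4"
  proof -
    have e: "{..4::nat} = {0,1,2,3,4}" by auto
    show ?thesis unfolding e by (simp add: algebra_simps)
  qed
  also have "\<dots> = fst x * (fst p^4 - 6*fst p^2 * snd p^2 + snd p^4) + snd x * (4*fst p^3 * snd p - 4*fst p * snd p^3)"
    unfolding coeff_PP by (simp add: algebra_simps)
  finally show ?thesis .
qed

lemma nn: "never_nullifies PP (UNIV - {0})"
  unfolding never_nullifies_def evalE_def
proof
  fix x :: "real \<times> real" assume "x \<in> UNIV - {0}"
  then have x: "x \<noteq> 0" by simp
  show "map_poly (\<lambda>c. eval2 c x) PP \<noteq> 0"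
  proof
    assume "map_poly (\<lambda>c. eval2 c x) PP = 0"
    then have "fst x = 0 \<and> snd x = 0" unfolding map_PP by simp
    then show False using x by (cases x) (simp add: zero_prod_def)
  qed
qed

lemma conn: "connected (UNIV - {0::real \<times> real})"
proof -
  have "connected (- {0::real \<times> real})" by (rule connected_punctured_universe) simp
  then show ?thesis by (simp add: Compl_eq_Diff_UNIV)
qed

lemma asub: "analytic_submanifold (UNIV - {0::real \<times> real})"
  unfolding analytic_submanifold_def
proof (intro exI[of _ 2] conjI ballI)
  let ?S = "UNIV - {0::real \<times> real}"
  fix p assume p: "p \<in> ?S"
  have o: "open ?S" by (intro open_Diff) auto
  show "\<exists>U. open U \<and> p \<in> U \<and>
        ((2::nat) = 2 \<and> ?S \<inter> U = U \<or>
         (2::nat) = 1 \<and> (\<exists>f f'. real_analytic_on U f \<and> (f has_derivative f') (at p) \<and>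
                     f' \<noteq> (\<lambda>_. 0) \<and> ?S \<inter> U = {x\<in>U. f x = 0}) \<or>
         (2::nat) = 0 \<and> ?S \<inter> U = {p})"
    using o p by (intro exI[of _ ?S]) simp
qed simp

lemma oi: "order_invariant DD (UNIV - {0})"
  unfolding order_invariant_def using ord_DD by auto

lemma ndel: "\<not> proj_delineable PP (UNIV - {0})"
  unfolding proj_delineable_def
proof (rule notI, elim exE conjE)
  let ?S = "UNIV - {0::real\<times>real}"
  fix k \<theta> m
  assume cont: "\<forall>l<k. continuous_map (subtopology euclidean ?S) RP1_top (\<theta> l)" and
    inr: "\<forall>l<k. \<forall>x\<in>?S. \<theta> l x \<in> RP1" and
    Z: "Z_RP1 PP ?S = (\<Union>l<k. {(x, \<theta> l x) | x. x \<in> ?S})" and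
    dis: "\<forall>l<k. \<forall>l'<k. l \<noteq> l' \<longrightarrow> (\<forall>x\<in>?S. \<theta> l x \<noteq> \<theta> l' x)" and
    mult: "\<forall>l<k. m l \<ge> 1 \<and> (\<forall>x\<in>?S. \<forall>p\<in>\<theta> l x. proj_root_mult (homog4 PP x) p (m l))"
  have "((0,1), proj_cls (1,0)) \<in> Z_RP1 PP ?S"
  proof -
    have "(1::real,0::real) \<noteq> 0" by (simp add: zero_prod_def)
    then have c: "proj_cls (1,0) \<in> RP1" "(1::real,0::real) \<in> proj_cls (1,0)" using self_cls by auto
    have e: "eval2 (homog4 PP (0,1)) (1,0) = 0" by (simp add: ev_homog)
    have "(0::real,1::real) \<in> ?S" by (simp add: zero_prod_def)
    then show ?thesis unfolding Z_RP1_def using c e by blast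
  qed
  then obtain l where l: "l < k" "proj_cls (1,0) = \<theta> l (0,1)" unfolding Z by auto
  define F where "F = (\<lambda>x. Fc (\<theta> l x))"
  have Fc: "continuous_on ?S F" unfolding F_def using cont l by (intro lift_cont) auto
  have root: "eval2 (homog4 PP x) p = 0 \<and> p \<noteq> 0" if "x \<in> ?S" "p \<in> \<theta> l x" for x p
    using mult l that unfolding proj_root_mult_def proj_root_def by blast
  have cs: "(cos s, sin s) \<in> ?S" for s
  proof -
    have "(cos s, sin s) \<noteq> 0"
    proof
      assume "(cos s, sin s) = 0"
      then have "sin s ^ 2 + cos s ^ 2 = 0" by (simp add: zero_prod_def)
      then show False by simp
    qed
    then show ?thesis by simp
  qed
  have F4: "F (cos s, sin s) ^ 4 = - ((complex_of_real (cos s) + \<i> * complex_of_real (sin s))^2)" for s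
  proof -
    have xs: "(cos s, sin s) \<in> ?S" by (rule cs)
    then obtain p where p: "p \<in> \<theta> l (cos s, sin s)" using RP1_ex inr l by blast
    obtain u v where uv: "p = (u,v)" by (cases p)
    have r: "eval2 (homog4 PP (cos s, sin s)) (u,v) = 0" "(u,v) \<noteq> 0" using root[OF xs p] uv by auto
    have "F (cos s, sin s) = Wf (u,v)" unfolding F_def using Fc_eq inr l xs p uv by auto
    then show ?thesis using key[of "cos s" "sin s" u v] r unfolding ev_homog by simp
  qed
  define h where "h = (\<lambda>s. F (cos s, sin s) * cis (- s / 2))"
  have hc: "continuous_on {0..2*pi} h"
  proof -
    have "continuous_on {0..2*pi} (\<lambda>s. F (cos s, sin s))"
      by (rule continuous_on_compose2[OF Fc]) (auto intro!: continuous_intros cs)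
    then show ?thesis unfolding h_def by (intro continuous_intros) auto
  qed
  have h4: "h s ^ 4 = -1" for s
  proof -
    have c: "complex_of_real (cos s) + \<i> * complex_of_real (sin s) = cis s" by (simp add: complex_eq_iff)
    have X1: "cis s ^ 2 * cis (- s / 2) ^ 4 = 1" by (simp only: Complex.DeMoivre cis_mult) (simp add: algebra_simps)
    have "h s ^ 4 = F (cos s, sin s) ^ 4 * cis (- s / 2) ^ 4" unfolding h_def by (simp add: power_mult_distrib)
    also have "\<dots> = - (cis s ^ 2 * cis (- s / 2) ^ 4)" unfolding F4 c by simp
    also have "- (cis s ^ 2 * cis (- s / 2) ^ 4) = -1" using X1 by simp
    finally show ?thesis .
  qed
  have fin: "finite (h ` {0..2*pi})"
  proof (rule finite_subset)
    show "h ` {0..2*pi} \<subseteq> {z. z ^ 8 = 1}"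
    proof
      fix z assume "z \<in> h ` {0..2*pi}"
      then obtain s where "z = h s" by auto
      then have "z ^ 8 = (h s ^ 4)^2" by (simp add: power_mult[symmetric])
      then show "z \<in> {z. z ^ 8 = 1}" using h4[of s] by simp
    qed
    show "finite {z::complex. z ^ 8 = 1}" by (rule finite_roots_unity) simp
  qed
  obtain a where a: "\<forall>s\<in>{0..2*pi}. h s = a"
    using continuous_finite_range_constant[OF connected_Icc hc fin] unfolding constant_on_def by blast
  have h0: "h 0 = F (1, 0)" unfolding h_def by simp
  have cpi: "cis (- pi) = -1" by (simp add: complex_eq_iff)
  have h2: "h (2*pi) = - F (1, 0)" unfolding h_def using cpi by simp
  have "h 0 = a" using a by simp
  moreover have "h (2*pi) = a" using a by simp
  ultimately have "a = - a" using h0 h2 by simp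
  then have "a = 0" by simp
  then have "h 0 = 0" using a by simp
  then show False using h4[of 0] by simp
qed

theorem mainTheorem10:
  shows "\<exists>(S :: (real \<times> real) set) (P :: real poly poly poly).
           connected S \<and> analytic_submanifold S \<and> degree P = 4 \<and>
           never_nullifies P S \<and>
           Disc4 P \<noteq> 0 \<and> order_invariant (Disc4 P) S \<and>
           \<not> proj_delineable P S"
proof (intro exI conjI)
  show "connected (UNIV - {0::real \<times> real})" by (rule conn)
  show "analytic_submanifold (UNIV - {0::real \<times> real})" by (rule asub)
  show "degree PP = 4" by (rule degree_PP)
  show "never_nullifies PP (UNIV - {0})" by (rule nn)
  show "Disc4 PP \<noteq> 0" unfolding Disc_PP using ev_DD[of "(1,0)"] by (auto simp: zero_prod_def)
  show "order_invariant (Disc4 PP) (UNIV - {0})" unfolding Disc_PP by (rule oi)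
  show "\<not> proj_delineable PP (UNIV - {0})" by (rule ndel)
qed

end
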